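(* Let $k\ge2$. There is a first-order formula $\gamma(x,y,z,t)$ in the group language such that for every $b_1\in Ab$ and all $n,l,m\in\mathbb{Z}$: $BS(1,k)\models\gamma(b_1^n,b_1^l,b_1^m,b_1)$ if and only if $n\cdot l=m$. (That is, multiplication of integers is definable on $\langle b_1\rangle$, identified with $\mathbb{Z}$ via $b_1^m\mapsto m$, with parameter $b_1$.)
   Context: $BS(1,k)=\langle a,b\mid b^{-1}ab=a^k\rangle$, identified with $\mathbb{Z}[1/k]\rtimes\mathbb{Z}$ (pairs $(y,m)$, $y\in\mathbb{Z}[1/k]=\{zk^i:z,i\in\mathbb{Z}\}$, product $(y_1,m_1)(y_2,m_2)=(y_1+y_2k^{-m_1},m_1+m_2)$), with $a=(1,0)$, $b=(0,1)$; $a^y=(y,0)$. $Ab=\{a^yb:y\in\mathbb{Z}[1/k]\}$. *)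

theory Defs
  imports Complex_Main "HOL-Algebra.Group"
begin

datatype gterm = GVar nat | GOne | GMul gterm gterm | GInv gterm

datatype gform = GEq gterm gterm | GNeg gform | GConj gform gform | GEx nat gform

fun tval :: "('a, 'b) monoid_scheme \<Rightarrow> (nat \<Rightarrow> 'a) \<Rightarrow> gterm \<Rightarrow> 'a" where
  "tval G e (GVar i) = e i"
| "tval G e GOne = \<one>\<^bsub>G\<^esub>"
| "tval G e (GMul s t) = tval G e s \<otimes>\<^bsub>G\<^esub> tval G e t"
| "tval G e (GInv t) = inv\<^bsub>G\<^esub> (tval G e t)"

fun sat :: "('a, 'b) monoid_scheme \<Rightarrow> (nat \<Rightarrow> 'a) \<Rightarrow> gform \<Rightarrow> bool" where
  "sat G e (GEq s t) = (tval G e s = tval G e t)"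
| "sat G e (GNeg \<phi>) = (\<not> sat G e \<phi>)"
| "sat G e (GConj \<phi> \<psi>) = (sat G e \<phi> \<and> sat G e \<psi>)"
| "sat G e (GEx x \<phi>) = (\<exists>a\<in>carrier G. sat G (e(x := a)) \<phi>)"

fun tfv :: "gterm \<Rightarrow> nat set" where
  "tfv (GVar i) = {i}"
| "tfv GOne = {}"
| "tfv (GMul s t) = tfv s \<union> tfv t"
| "tfv (GInv t) = tfv t"

fun fv :: "gform \<Rightarrow> nat set" where
  "fv (GEq s t) = tfv s \<union> tfv t"
| "fv (GNeg \<phi>) = fv \<phi>"
| "fv (GConj \<phi> \<psi>) = fv \<phi> \<union> fv \<psi>"
| "fv (GEx x \<phi>) = fv \<phi> - {x}"

text \<open>Assignment x:=v0, y:=v1, z:=v2, t:=v3 (variables 0,1,2,3).\<close>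
definition asg4 :: "'a \<Rightarrow> 'a \<Rightarrow> 'a \<Rightarrow> 'a \<Rightarrow> 'a \<Rightarrow> nat \<Rightarrow> 'a" where
  "asg4 d v0 v1 v2 v3 i =
     (if i = 0 then v0 else if i = 1 then v1 else if i = 2 then v2 else if i = 3 then v3 else d)"

section \<open>BS(1,k) as Z[1/k] \<rtimes> Z\<close>

definition Zinvk :: "int \<Rightarrow> rat set" where
  "Zinvk k = {of_int z * (of_int k) powi i | z i. True}"

definition BS :: "int \<Rightarrow> (rat \<times> int) monoid" where
  "BS k = \<lparr> carrier = {p. fst p \<in> Zinvk k},
            mult = (\<lambda>(y1, m1) (y2, m2). (y1 + y2 * (of_int k) powi (- m1), m1 + m2)),
            one = (0, 0) \<rparr>"

definition bs_a_pow :: "rat \<Rightarrow> rat \<times> int" where "bs_a_pow y = (y, 0)"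
definition bs_b :: "rat \<times> int" where "bs_b = (0, 1)"

definition Ab :: "int \<Rightarrow> (rat \<times> int) set" where
  "Ab k = {bs_a_pow y \<otimes>\<^bsub>BS k\<^esub> bs_b | y. y \<in> Zinvk k}"

end

theory Submission
  imports Defs
begin


lemma Zinvk_iff:
  assumes k0: "k \<noteq> 0"
  shows "q \<in> Zinvk k \<longleftrightarrow> (\<exists>n::nat. \<exists>a::int. q * of_int k ^ n = of_int a)"
proof
  assume "q \<in> Zinvk k"
  then obtain z i where q: "q = of_int z * (of_int k) powi i" unfolding Zinvk_def by auto
  show "\<exists>n::nat. \<exists>a::int. q * of_int k ^ n = of_int a"
  proof (cases "i \<ge> 0")
    case True
    then have "q = of_int (z * k ^ nat i)" using q by (simp add: power_int_def)
    then show ?thesis by (intro exI[of _ 0] exI[of _ "z * k ^ nat i"]) simp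
  next
    case False
    then have "(of_int k::rat) powi i * of_int k ^ nat (-i) = 1"
    proof -
      have "(of_int k::rat) ^ nat (-i) = (of_int k::rat) powi (-i)" using False by (simp add: power_int_def)
      also have "(of_int k::rat) powi i * \<dots> = (of_int k::rat) powi (i + (-i))"
        using k0 by (simp add: power_int_minus)
      finally show ?thesis by simp
    qed
    then show ?thesis using q by (intro exI[of _ "nat (-i)"] exI[of _ z]) (simp add: mult.assoc)
  qed
next
  assume "\<exists>n::nat. \<exists>a::int. q * of_int k ^ n = of_int a"
  then obtain n a where h: "q * of_int k ^ n = of_int a" by auto
  have "q = of_int a * (of_int k) powi (- int n)"
    using h k0 by (simp add: power_int_minus field_simps)
  then show "q \<in> Zinvk k" unfolding Zinvk_def by blast
qed

lemma Z_int: "rat_of_int a \<in> Zinvk k"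
  unfolding Zinvk_def by (rule CollectI, rule exI[of _ a], rule exI[of _ 0]) simp

lemma Z_powi: "(rat_of_int k) powi i \<in> Zinvk k"
  unfolding Zinvk_def by (rule CollectI, rule exI[of _ 1], rule exI[of _ i]) simp

lemma Z_add:
  assumes k0: "k \<noteq> 0" and "q1 \<in> Zinvk k" "q2 \<in> Zinvk k"
  shows "q1 + q2 \<in> Zinvk k"
proof -
  obtain n1 a1 where h1: "q1 * of_int k ^ n1 = of_int a1" using assms Zinvk_iff by blast
  obtain n2 a2 where h2: "q2 * of_int k ^ n2 = of_int a2" using assms Zinvk_iff by blast
  have "(q1 + q2) * of_int k ^ (n1 + n2) = of_int (a1 * k ^ n2 + a2 * k ^ n1)"
    by (simp add: algebra_simps power_add flip: h1 h2)
  then show ?thesis using Zinvk_iff[OF k0] by blast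
qed

lemma Z_mult:
  assumes k0: "k \<noteq> 0" and "q1 \<in> Zinvk k" "q2 \<in> Zinvk k"
  shows "q1 * q2 \<in> Zinvk k"
proof -
  obtain n1 a1 where h1: "q1 * of_int k ^ n1 = of_int a1" using assms Zinvk_iff by blast
  obtain n2 a2 where h2: "q2 * of_int k ^ n2 = of_int a2" using assms Zinvk_iff by blast
  have "(q1 * q2) * of_int k ^ (n1 + n2) = of_int (a1 * a2)"
    by (simp add: algebra_simps power_add flip: h1 h2)
  then show ?thesis using Zinvk_iff[OF k0] by blast
qed

lemma Z_uminus:
  assumes k0: "k \<noteq> 0" and "q \<in> Zinvk k"
  shows "- q \<in> Zinvk k"
  using Z_mult[OF k0 Z_int[of "-1"] assms(2)] by simp

lemma Z_diff:
  assumes k0: "k \<noteq> 0" and "q1 \<in> Zinvk k" "q2 \<in> Zinvk k"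
  shows "q1 - q2 \<in> Zinvk k"
  using Z_add[OF k0 assms(2) Z_uminus[OF k0 assms(3)]] by simp

lemma Z_0: "0 \<in> Zinvk k" using Z_int[of 0] by simp
lemma Z_1: "1 \<in> Zinvk k" using Z_int[of 1] by simp

lemma BS_mult: "(a, b) \<otimes>\<^bsub>BS k\<^esub> (c, d) = (a + c * (of_int k) powi (- b), b + d)"
  by (simp add: BS_def)
lemma BS_one: "\<one>\<^bsub>BS k\<^esub> = (0, 0)"
  by (simp add: BS_def)
lemma BS_carrier: "p \<in> carrier (BS k) \<longleftrightarrow> fst p \<in> Zinvk k"
  by (simp add: BS_def)

lemma BS_group: assumes k0: "k \<noteq> 0" shows "group (BS k)"
proof (rule groupI)
  fix x y assume "x \<in> carrier (BS k)" "y \<in> carrier (BS k)"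
  then show "x \<otimes>\<^bsub>BS k\<^esub> y \<in> carrier (BS k)"
    by (cases x, cases y) (auto simp: BS_mult BS_carrier intro!: Z_add Z_mult Z_powi k0)
next
  show "\<one>\<^bsub>BS k\<^esub> \<in> carrier (BS k)" by (simp add: BS_one BS_carrier Z_0)
next
  fix x y z assume "x \<in> carrier (BS k)" "y \<in> carrier (BS k)" "z \<in> carrier (BS k)"
  obtain x1 x2 y1 y2 z1 z2 where "x = (x1, x2)" "y = (y1, y2)" "z = (z1, z2)" by force
  moreover have "(of_int k::rat) powi (- x2 + - y2) = (of_int k) powi (- x2) * (of_int k) powi (- y2)"
    using k0 power_int_add[of "of_int k::rat" "-x2" "-y2"] by simp
  ultimately show "x \<otimes>\<^bsub>BS k\<^esub> y \<otimes>\<^bsub>BS k\<^esub> z = x \<otimes>\<^bsub>BS k\<^esub> (y \<otimes>\<^bsub>BS k\<^esub> z)"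
    by (simp add: BS_mult algebra_simps)
next
  fix x assume "x \<in> carrier (BS k)"
  then show "\<one>\<^bsub>BS k\<^esub> \<otimes>\<^bsub>BS k\<^esub> x = x"
    by (cases x) (simp add: BS_one BS_mult)
next
  fix x assume x: "x \<in> carrier (BS k)"
  obtain x1 x2 where xx: "x = (x1, x2)" by force
  have "(- x1 * (of_int k) powi x2, - x2) \<in> carrier (BS k)"
    using x xx by (auto simp: BS_carrier intro!: Z_uminus Z_mult Z_powi k0)
  moreover have "(- x1 * (of_int k) powi x2, - x2) \<otimes>\<^bsub>BS k\<^esub> x = \<one>\<^bsub>BS k\<^esub>"
    using xx by (simp add: BS_mult BS_one)
  ultimately show "\<exists>y\<in>carrier (BS k). y \<otimes>\<^bsub>BS k\<^esub> x = \<one>\<^bsub>BS k\<^esub>" by blast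
qed

lemma BS_inv:
  assumes k0: "k \<noteq> 0" and "(a, b) \<in> carrier (BS k)"
  shows "inv\<^bsub>BS k\<^esub> (a, b) = (- a * (of_int k) powi b, - b)"
proof -
  interpret group "BS k" by (rule BS_group[OF k0])
  show ?thesis
    by (rule inv_equality) (use assms in \<open>auto simp: BS_mult BS_one BS_carrier intro!: Z_uminus Z_mult Z_powi\<close>)
qed



lemma kpow_dvd: "((k::int) ^ a - 1) dvd (k ^ (a * d) - 1)"
proof -
  have "k ^ (a * d) - 1 = (k ^ a) ^ d - 1" by (simp add: power_mult)
  also have "\<dots> = (k ^ a - 1) * (\<Sum>i<d. (k ^ a) ^ i)" by (rule power_diff_1_eq)
  finally show ?thesis by simp
qed

lemma kpow_eq_1: assumes "(k::int) \<ge> 2" "k ^ r = 1" shows "r = 0"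
proof (rule ccontr)
  assume "r \<noteq> 0"
  then have "1 < k ^ r" using assms(1) by (intro one_less_power) auto
  then show False using assms(2) by simp
qed

lemma kpow_dvd_imp:
  assumes k2: "(k::int) \<ge> 2" and a0: "a > 0" and d: "(k ^ a - 1) dvd (k ^ b - 1)"
  shows "a dvd b"
proof -
  define q r where "q = b div a" and "r = b mod a"
  have b: "b = a * q + r" unfolding q_def r_def by simp
  have ra: "r < a" unfolding r_def using a0 by simp
  have "k ^ b - 1 = k ^ r * (k ^ (a * q) - 1) + (k ^ r - 1)"
    by (simp add: b power_add algebra_simps)
  moreover have "(k ^ a - 1) dvd k ^ r * (k ^ (a * q) - 1)"
    using kpow_dvd by (rule dvd_mult)
  ultimately have "(k ^ a - 1) dvd (k ^ r - 1)"
    using d by (metis dvd_add_right_iff)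
  moreover have "0 \<le> k ^ r - 1" using k2 by simp
  moreover have "k ^ r < k ^ a" using k2 ra by (intro power_strict_increasing) auto
  ultimately have "k ^ r - 1 = 0"
    using zdvd_not_zless[of "k ^ r - 1" "k ^ a - 1"] by fastforce
  then have "r = 0" using kpow_eq_1[OF k2] by simp
  then show ?thesis using b by simp
qed

definition Dv :: "int \<Rightarrow> rat \<Rightarrow> rat \<Rightarrow> bool" where
  "Dv k \<alpha> \<beta> \<longleftrightarrow> (\<exists>\<rho>\<in>Zinvk k. \<beta> = \<alpha> * \<rho>)"

lemma Dv_int:
  assumes k2: "(k::int) \<ge> 2"
  shows "Dv k (of_int (k ^ a - 1)) (of_int (k ^ b - 1)) \<longleftrightarrow> a dvd b"
proof
  assume "a dvd b"
  then obtain d where "b = a * d" by auto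
  then obtain z where "k ^ b - 1 = (k ^ a - 1) * z" using kpow_dvd by (metis dvdE)
  then show "Dv k (of_int (k ^ a - 1)) (of_int (k ^ b - 1))"
    unfolding Dv_def by (intro bexI[of _ "of_int z"] Z_int) (metis of_int_mult)
next
  assume "Dv k (of_int (k ^ a - 1)) (of_int (k ^ b - 1))"
  then obtain \<rho> where \<rho>: "\<rho> \<in> Zinvk k" and e: "of_int (k ^ b - 1) = of_int (k ^ a - 1) * \<rho>"
    unfolding Dv_def by auto
  have k0: "k \<noteq> 0" using k2 by simp
  obtain n z where nz: "\<rho> * of_int k ^ n = of_int z" using \<rho> Zinvk_iff[OF k0] by blast
  have "(of_int ((k ^ b - 1) * k ^ n) :: rat) = of_int (k ^ b - 1) * of_int k ^ n" by simp
  also have "\<dots> = of_int (k ^ a - 1) * (\<rho> * of_int k ^ n)" by (simp only: e mult.assoc)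
  also have "\<dots> = of_int ((k ^ a - 1) * z)" by (simp only: nz of_int_mult)
  finally have "(of_int ((k ^ b - 1) * k ^ n) :: rat) = of_int ((k ^ a - 1) * z)" .
  then have ei: "(k ^ b - 1) * k ^ n = (k ^ a - 1) * z" by (simp only: of_int_eq_iff)
  show "a dvd b"
  proof (cases "a = 0")
    case True
    then have "(k ^ b - 1) * k ^ n = 0" using ei by simp
    then have "k ^ b = 1" using k0 by simp
    then show ?thesis using kpow_eq_1[OF k2] True by simp
  next
    case False
    have "coprime (k ^ a - 1) k"
    proof -
      have "coprime (k ^ a - 1) (k ^ a)" by (rule coprime_diff_one_left)
      then show ?thesis using False by simp
    qed
    then have "coprime (k ^ a - 1) (k ^ n)" by simp
    moreover have "(k ^ a - 1) dvd (k ^ b - 1) * k ^ n" using ei by simp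
    ultimately have "(k ^ a - 1) dvd (k ^ b - 1)" by (simp add: coprime_dvd_mult_left_iff)
    then show ?thesis using kpow_dvd_imp[OF k2] False by simp
  qed
qed

lemma Dv_unit:
  assumes k0: "k \<noteq> 0" and e1: "e1 \<noteq> 0" "e1 \<in> Zinvk k" "inverse e1 \<in> Zinvk k"
    and e2: "e2 \<noteq> 0" "e2 \<in> Zinvk k" "inverse e2 \<in> Zinvk k"
  shows "Dv k (e1 * \<alpha>) (e2 * \<beta>) \<longleftrightarrow> Dv k \<alpha> \<beta>"
proof
  assume "Dv k (e1 * \<alpha>) (e2 * \<beta>)"
  then obtain \<rho> where r: "\<rho> \<in> Zinvk k" "e2 * \<beta> = e1 * \<alpha> * \<rho>" unfolding Dv_def by auto
  have "\<beta> = \<alpha> * (e1 * \<rho> * inverse e2)" using r(2) e2(1)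
    by (simp add: field_simps)
  moreover have "e1 * \<rho> * inverse e2 \<in> Zinvk k" using r(1) e1 e2 by (intro Z_mult k0)
  ultimately show "Dv k \<alpha> \<beta>" unfolding Dv_def by blast
next
  assume "Dv k \<alpha> \<beta>"
  then obtain \<rho> where r: "\<rho> \<in> Zinvk k" "\<beta> = \<alpha> * \<rho>" unfolding Dv_def by auto
  have "e2 * \<beta> = e1 * \<alpha> * (e2 * \<rho> * inverse e1)" using r(2) e1(1)
    by (simp add: field_simps)
  moreover have "e2 * \<rho> * inverse e1 \<in> Zinvk k" using r(1) e1 e2 by (intro Z_mult k0)
  ultimately show "Dv k (e1 * \<alpha>) (e2 * \<beta>)" unfolding Dv_def by blast
qed

lemma one_minus_pow_norm:
  assumes k0: "k \<noteq> 0"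
  shows "1 - (rat_of_int k) powi (- n) =
    (if n \<ge> 0 then (rat_of_int k) powi (- n) else -1) * of_int (k ^ nat \<bar>n\<bar> - 1)"
proof (cases "n \<ge> 0")
  case True
  have "(rat_of_int k) powi (- n) * (rat_of_int k) ^ nat n = (rat_of_int k) powi (- n) * (rat_of_int k) powi n"
    using True by (simp add: power_int_def)
  also have "\<dots> = 1" using k0 by (simp add: power_int_minus)
  finally show ?thesis using True by (simp add: algebra_simps)
next
  case False
  then have "(rat_of_int k) powi (- n) = (rat_of_int k) ^ nat \<bar>n\<bar>" by (simp add: power_int_def)
  then show ?thesis using False by simp
qed

lemma unit_facts:
  assumes k0: "k \<noteq> 0"
  shows "(if n \<ge> 0 then (rat_of_int k) powi (- n) else -1) \<noteq> 0"
    "(if n \<ge> 0 then (rat_of_int k) powi (- n) else -1) \<in> Zinvk k"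
    "inverse (if n \<ge> 0 then (rat_of_int k) powi (- n) else -1) \<in> Zinvk k"
proof -
  show "(if n \<ge> 0 then (rat_of_int k) powi (- n) else -1) \<noteq> 0" using k0 by simp
  show "(if n \<ge> 0 then (rat_of_int k) powi (- n) else -1) \<in> Zinvk k"
    using Z_powi Z_int[of "-1"] by simp
  have "inverse ((rat_of_int k) powi (- n)) = (rat_of_int k) powi n"
    by (simp add: power_int_minus)
  then show "inverse (if n \<ge> 0 then (rat_of_int k) powi (- n) else -1) \<in> Zinvk k"
    using Z_powi Z_int[of "-1"] by simp
qed

lemma Dv_pow:
  assumes k2: "(k::int) \<ge> 2"
  shows "Dv k (1 - (rat_of_int k) powi (- l)) (1 - (rat_of_int k) powi (- m)) \<longleftrightarrow> l dvd m"
proof -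
  have k0: "k \<noteq> 0" using k2 by simp
  have "Dv k (1 - (rat_of_int k) powi (- l)) (1 - (rat_of_int k) powi (- m)) \<longleftrightarrow>
        Dv k (of_int (k ^ nat \<bar>l\<bar> - 1)) (of_int (k ^ nat \<bar>m\<bar> - 1))"
    unfolding one_minus_pow_norm[OF k0, of l] one_minus_pow_norm[OF k0, of m]
    by (rule Dv_unit[OF k0 unit_facts[OF k0] unit_facts[OF k0]])
  also have "\<dots> \<longleftrightarrow> nat \<bar>l\<bar> dvd nat \<bar>m\<bar>" by (rule Dv_int[OF k2])
  also have "\<dots> \<longleftrightarrow> l dvd m"
    by (metis abs_dvd_iff dvd_abs_iff abs_ge_zero int_nat_eq of_nat_dvd_iff)
  finally show ?thesis .
qed



locale bsl =
  fixes k :: int and y :: rat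
  assumes k2: "k \<ge> 2" and yZ: "y \<in> Zinvk k"
begin

abbreviation "G \<equiv> BS k"
abbreviation "K \<equiv> (rat_of_int k)"
definition "t = (y, 1::int)"
definition "c = y * K / (K - 1)"

lemma k0: "k \<noteq> 0" using k2 by simp
lemma K0: "K \<noteq> 0" using k2 by simp
lemma K1: "K - 1 \<noteq> 0" using k2 by simp

sublocale grp: group G by (rule BS_group[OF k0])

lemma t_carrier: "t \<in> carrier G" using yZ by (simp add: t_def BS_carrier)

lemma Kpow_cancel: "K powi i * K powi j = K powi (i + j)"
  using K0 by (simp add: power_int_add)

lemma comm_t_iff:
  "(z, j) \<otimes>\<^bsub>G\<^esub> t = t \<otimes>\<^bsub>G\<^esub> (z, j) \<longleftrightarrow> z = c * (1 - K powi (- j))"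
proof -
  have "(z, j) \<otimes>\<^bsub>G\<^esub> t = t \<otimes>\<^bsub>G\<^esub> (z, j) \<longleftrightarrow> z + y * K powi (- j) = y + z * inverse K"
    by (simp add: t_def BS_mult power_int_minus)
  also have "\<dots> \<longleftrightarrow> z = c * (1 - K powi (- j))"
    using K0 K1 unfolding c_def by (auto simp: field_simps)
  finally show ?thesis .
qed

lemma snd_pow: "x \<in> carrier G \<Longrightarrow> snd (x [^]\<^bsub>G\<^esub> (n::nat)) = int n * snd x"
proof (induction n)
  case 0 then show ?case by (simp add: BS_one)
next
  case (Suc n)
  obtain a b where ab: "x [^]\<^bsub>G\<^esub> n = (a, b)" by force
  obtain a' b' where ab': "x = (a', b')" by force
  have "x [^]\<^bsub>G\<^esub> Suc n = x [^]\<^bsub>G\<^esub> n \<otimes>\<^bsub>G\<^esub> x" by simp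
  then show ?case using Suc ab ab' by (simp add: BS_mult algebra_simps)
qed

lemma snd_inv: "x \<in> carrier G \<Longrightarrow> snd (inv\<^bsub>G\<^esub> x) = - snd x"
  by (cases x) (simp add: BS_inv[OF k0])

lemma snd_tpow: "snd (t [^]\<^bsub>G\<^esub> (n::int)) = n"
proof (cases "n < 0")
  case True
  have e: "t [^]\<^bsub>G\<^esub> n = inv\<^bsub>G\<^esub> (t [^]\<^bsub>G\<^esub> nat (-n))"
    using True by (simp only: int_pow_def2 if_True)
  have c: "t [^]\<^bsub>G\<^esub> nat (-n) \<in> carrier G" using t_carrier by (rule grp.nat_pow_closed)
  have "snd (t [^]\<^bsub>G\<^esub> nat (-n)) = - n"
    using snd_pow[OF t_carrier, of "nat (-n)"] True by (simp add: t_def)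
  then show ?thesis unfolding e snd_inv[OF c] by simp
next
  case False
  have e: "t [^]\<^bsub>G\<^esub> n = t [^]\<^bsub>G\<^esub> nat n"
    using False by (simp only: int_pow_def2 if_False)
  show ?thesis unfolding e using snd_pow[OF t_carrier, of "nat n"] False by (simp add: t_def)
qed

lemma tpow_carrier: "t [^]\<^bsub>G\<^esub> (n::int) \<in> carrier G"
  using t_carrier by simp

lemma tpow_comm: "t [^]\<^bsub>G\<^esub> (n::int) \<otimes>\<^bsub>G\<^esub> t = t \<otimes>\<^bsub>G\<^esub> t [^]\<^bsub>G\<^esub> n"
proof -
  have "t [^]\<^bsub>G\<^esub> n \<otimes>\<^bsub>G\<^esub> t = t [^]\<^bsub>G\<^esub> (n + 1)"
    using t_carrier by (simp add: grp.int_pow_mult)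
  also have "\<dots> = t [^]\<^bsub>G\<^esub> (1 + n)" by (simp add: add.commute)
  also have "\<dots> = t \<otimes>\<^bsub>G\<^esub> t [^]\<^bsub>G\<^esub> n"
    using t_carrier by (simp add: grp.int_pow_mult)
  finally show ?thesis .
qed

lemma fst_tpow: "fst (t [^]\<^bsub>G\<^esub> (n::int)) = c * (1 - K powi (- n))"
proof -
  obtain a b where ab: "t [^]\<^bsub>G\<^esub> n = (a, b)" by force
  have "b = n" using snd_tpow[of n] ab by simp
  then show ?thesis using tpow_comm[of n] ab comm_t_iff by simp
qed

lemma tpow_eq: "t [^]\<^bsub>G\<^esub> (n::int) = (c * (1 - K powi (- n)), n)"
  using fst_tpow snd_tpow by (metis prod.collapse)

lemma inC: "x \<in> carrier G \<Longrightarrow> x \<otimes>\<^bsub>G\<^esub> t = t \<otimes>\<^bsub>G\<^esub> x \<Longrightarrow> x = t [^]\<^bsub>G\<^esub> (snd x)"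
  by (cases x) (simp add: tpow_eq comm_t_iff)

lemma c_Z: "c * (1 - K powi (- n)) \<in> Zinvk k"
  using tpow_carrier[of n] by (simp add: tpow_eq BS_carrier)

lemma tpow_inj: "t [^]\<^bsub>G\<^esub> (a::int) = t [^]\<^bsub>G\<^esub> b \<longleftrightarrow> a = b"
  by (metis snd_tpow)

lemma comm_formula:
  assumes "(z, i) \<in> carrier G" "(r, j) \<in> carrier G"
  shows "(z, i) \<otimes>\<^bsub>G\<^esub> (r, j) \<otimes>\<^bsub>G\<^esub> inv\<^bsub>G\<^esub> (z, i) \<otimes>\<^bsub>G\<^esub> inv\<^bsub>G\<^esub> (r, j)
     = (z * (1 - K powi (- j)) - r * (1 - K powi (- i)), 0)"
proof -
  have e1: "K powi i * K powi (- i - j) = K powi (- j)"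
    by (simp add: Kpow_cancel)
  have e2: "K powi j * K powi (- j) = 1"
    by (simp add: Kpow_cancel)
  show ?thesis using assms
    by (simp add: BS_inv[OF k0] BS_mult algebra_simps e1 e2)
qed

definition "cm x w = x \<otimes>\<^bsub>G\<^esub> w \<otimes>\<^bsub>G\<^esub> inv\<^bsub>G\<^esub> x \<otimes>\<^bsub>G\<^esub> inv\<^bsub>G\<^esub> w"

lemma cm_tpow:
  assumes "(r, j) \<in> carrier G"
  shows "cm (t [^]\<^bsub>G\<^esub> (m::int)) (r, j) = ((1 - K powi (- m)) * (c * (1 - K powi (- j)) - r), 0)"
proof -
  have "(c * (1 - K powi (- m)), m) \<in> carrier G" using tpow_carrier[of m] by (simp add: tpow_eq)
  then show ?thesis unfolding cm_def tpow_eq using comm_formula[OF _ assms] by (simp add: algebra_simps)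
qed

lemma Div_iff:
  "(\<forall>w\<in>carrier G. \<exists>u\<in>carrier G. cm (t [^]\<^bsub>G\<^esub> (m::int)) w = cm (t [^]\<^bsub>G\<^esub> (l::int)) u)
    \<longleftrightarrow> l dvd m"
proof -
  have "(\<forall>w\<in>carrier G. \<exists>u\<in>carrier G. cm (t [^]\<^bsub>G\<^esub> m) w = cm (t [^]\<^bsub>G\<^esub> l) u)
    \<longleftrightarrow> Dv k (1 - K powi (- l)) (1 - K powi (- m))"
  proof
    assume H: "\<forall>w\<in>carrier G. \<exists>u\<in>carrier G. cm (t [^]\<^bsub>G\<^esub> m) w = cm (t [^]\<^bsub>G\<^esub> l) u"
    have w: "(-1, 0) \<in> carrier G" using Z_int[of "-1" k] by (simp add: BS_carrier)
    obtain u where u: "u \<in> carrier G" "cm (t [^]\<^bsub>G\<^esub> m) (-1, 0) = cm (t [^]\<^bsub>G\<^esub> l) u"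
      using H w by blast
    obtain s j where sj: "u = (s, j)" by force
    have sZ: "s \<in> Zinvk k" using u(1) sj by (simp add: BS_carrier)
    have "1 - K powi (- m) = (1 - K powi (- l)) * (c * (1 - K powi (- j)) - s)"
      using u cm_tpow[OF w, of m] cm_tpow[of s j l] sj by simp
    moreover have "c * (1 - K powi (- j)) - s \<in> Zinvk k" by (intro Z_diff k0 c_Z sZ)
    ultimately show "Dv k (1 - K powi (- l)) (1 - K powi (- m))" unfolding Dv_def by blast
  next
    assume "Dv k (1 - K powi (- l)) (1 - K powi (- m))"
    then obtain \<rho> where r: "\<rho> \<in> Zinvk k" "1 - K powi (- m) = (1 - K powi (- l)) * \<rho>"
      unfolding Dv_def by blast
    show "\<forall>w\<in>carrier G. \<exists>u\<in>carrier G. cm (t [^]\<^bsub>G\<^esub> m) w = cm (t [^]\<^bsub>G\<^esub> l) u"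
    proof
      fix w assume w: "w \<in> carrier G"
      obtain r' j where rj: "w = (r', j)" by force
      have rZ: "r' \<in> Zinvk k" using w rj by (simp add: BS_carrier)
      define s where "s = - \<rho> * (c * (1 - K powi (- j)) - r')"
      have sZ: "s \<in> Zinvk k" unfolding s_def by (intro Z_mult Z_uminus Z_diff k0 c_Z rZ r(1))
      then have uc: "(s, 0) \<in> carrier G" by (simp add: BS_carrier)
      have "cm (t [^]\<^bsub>G\<^esub> m) w = cm (t [^]\<^bsub>G\<^esub> l) (s, 0)"
        using cm_tpow[OF uc, of l] cm_tpow[of r' j m] w rj r(2) unfolding s_def by simp
      then show "\<exists>u\<in>carrier G. cm (t [^]\<^bsub>G\<^esub> m) w = cm (t [^]\<^bsub>G\<^esub> l) u" using uc by blast
    qed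
  qed
  also have "\<dots> \<longleftrightarrow> l dvd m" by (rule Dv_pow[OF k2])
  finally show ?thesis .
qed

end


definition "gAll v \<phi> = GNeg (GEx v (GNeg \<phi>))"
definition "gImp \<phi> \<psi> = GNeg (GConj \<phi> (GNeg \<psi>))"
definition "gIff \<phi> \<psi> = GConj (gImp \<phi> \<psi>) (gImp \<psi> \<phi>)"
definition "TT = GVar 3"
definition "InC v = GEq (GMul (GVar v) TT) (GMul TT (GVar v))"
definition "CmT P Q = GMul (GMul (GMul P Q) (GInv P)) (GInv Q)"
definition "DivF P Q = gAll 10 (GEx 11 (GEq (CmT Q (GVar 10)) (CmT P (GVar 11))))"
definition "LcmF P Q R = gAll 12 (gImp (InC 12)
   (gIff (DivF R (GVar 12)) (GConj (DivF P (GVar 12)) (DivF Q (GVar 12)))))"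
definition "SqF X S = GEx 13 (GConj (InC 13) (GEx 14 (GConj (InC 14)
   (GConj (LcmF X (GMul X TT) (GVar 13)) (GConj (LcmF X (GMul X (GInv TT)) (GVar 14))
   (GConj (GEq (GMul S X) (GVar 13)) (GEq (GMul S (GInv X)) (GVar 14))))))))"
definition "gamma = GEx 15 (GConj (InC 15) (GEx 16 (GConj (InC 16) (GEx 17 (GConj (InC 17)
   (GConj (SqF (GMul (GVar 0) (GVar 1)) (GVar 15)) (GConj (SqF (GVar 0) (GVar 16))
   (GConj (SqF (GVar 1) (GVar 17))
     (GEq (GVar 15) (GMul (GMul (GMul (GVar 16) (GVar 17)) (GVar 2)) (GVar 2)))))))))))"

lemma fv_DivF: "fv (DivF P Q) \<subseteq> tfv P \<union> tfv Q"
  unfolding DivF_def gAll_def CmT_def by auto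

lemma fv_InC: "fv (InC v) \<subseteq> {v, 3}"
  unfolding InC_def TT_def by auto

lemma fv_LcmF: "fv (LcmF P Q R) \<subseteq> tfv P \<union> tfv Q \<union> tfv R \<union> {3}"
proof -
  have "fv (DivF R (GVar 12)) \<subseteq> tfv R \<union> {12}" "fv (DivF P (GVar 12)) \<subseteq> tfv P \<union> {12}"
       "fv (DivF Q (GVar 12)) \<subseteq> tfv Q \<union> {12}"
    using fv_DivF by fastforce+
  then show ?thesis using fv_InC[of 12] unfolding LcmF_def gAll_def gIff_def gImp_def by auto
qed

lemma fv_SqF: "fv (SqF X S) \<subseteq> tfv X \<union> tfv S \<union> {3}"
proof -
  have "fv (LcmF X (GMul X TT) (GVar 13)) \<subseteq> tfv X \<union> {3, 13}"
       "fv (LcmF X (GMul X (GInv TT)) (GVar 14)) \<subseteq> tfv X \<union> {3, 14}"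
    using fv_LcmF[of X "GMul X TT" "GVar 13"] fv_LcmF[of X "GMul X (GInv TT)" "GVar 14"]
    by (auto simp: TT_def)
  then show ?thesis using fv_InC[of 13] fv_InC[of 14] unfolding SqF_def by auto
qed

lemma fv_gamma: "fv gamma \<subseteq> {0, 1, 2, 3}"
proof -
  have "fv (SqF (GMul (GVar 0) (GVar 1)) (GVar 15)) \<subseteq> {0, 1, 3, 15}"
       "fv (SqF (GVar 0) (GVar 16)) \<subseteq> {0, 3, 16}"
       "fv (SqF (GVar 1) (GVar 17)) \<subseteq> {1, 3, 17}"
    using fv_SqF[of "GMul (GVar 0) (GVar 1)" "GVar 15"] fv_SqF[of "GVar 0" "GVar 16"]
      fv_SqF[of "GVar 1" "GVar 17"] by auto
  then show ?thesis using fv_InC[of 15] fv_InC[of 16] fv_InC[of 17] unfolding gamma_def by auto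
qed

lemma tval_upd: "x \<notin> tfv s \<Longrightarrow> tval G (e(x := a)) s = tval G e s"
  by (induction s) auto

definition "ok P \<longleftrightarrow> (\<forall>v\<in>tfv P. v \<notin> {10, 11, 12, 13, 14})"

lemma ok_upd: "ok P \<Longrightarrow> v \<in> {10, 11, 12, 13, 14} \<Longrightarrow> tval G (e(v := a)) P = tval G e P"
  unfolding ok_def by (rule tval_upd) auto

lemma int_sq:
  fixes a s :: int
  shows "(\<exists>m1 m2. \<bar>m1\<bar> = \<bar>a * (a + 1)\<bar> \<and> \<bar>m2\<bar> = \<bar>a * (a - 1)\<bar> \<and> s + a = m1 \<and> s - a = m2)
     \<longleftrightarrow> s = a * a"
proof
  assume "\<exists>m1 m2. \<bar>m1\<bar> = \<bar>a * (a + 1)\<bar> \<and> \<bar>m2\<bar> = \<bar>a * (a - 1)\<bar> \<and> s + a = m1 \<and> s - a = m2"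
  then obtain m1 m2 where h: "\<bar>m1\<bar> = \<bar>a * (a + 1)\<bar>" "\<bar>m2\<bar> = \<bar>a * (a - 1)\<bar>" "s + a = m1" "s - a = m2"
    by blast
  from h(1) have m1: "m1 = a * (a + 1) \<or> m1 = - (a * (a + 1))" by (auto simp: abs_eq_iff)
  from h(2) have m2: "m2 = a * (a - 1) \<or> m2 = - (a * (a - 1))" by (auto simp: abs_eq_iff)
  show "s = a * a"
  proof (cases "m1 = a * (a + 1)")
    case True then show ?thesis using h(3) by (simp add: algebra_simps)
  next
    case False
    then have e1: "s = - (a * (a + 1)) - a" using m1 h(3) by simp
    show ?thesis
    proof (cases "m2 = a * (a - 1)")
      case True then show ?thesis using h(4) by (simp add: algebra_simps)
    next
      case False
      then have "s = - (a * (a - 1)) + a" using m2 h(4) by simp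
      with e1 have "a * (a + 1) + a = a * (a - 1) - a" by simp
      then have "a = 0" by (simp add: algebra_simps)
      then show ?thesis using e1 by simp
    qed
  qed
next
  assume "s = a * a"
  then show "\<exists>m1 m2. \<bar>m1\<bar> = \<bar>a * (a + 1)\<bar> \<and> \<bar>m2\<bar> = \<bar>a * (a - 1)\<bar> \<and> s + a = m1 \<and> s - a = m2"
    by (intro exI[of _ "a * (a + 1)"] exI[of _ "a * (a - 1)"]) (simp add: algebra_simps)
qed

lemma lcm_char:
  fixes a b r :: int
  assumes "coprime a b"
  shows "(\<forall>d. r dvd d \<longleftrightarrow> a dvd d \<and> b dvd d) \<longleftrightarrow> \<bar>r\<bar> = \<bar>a * b\<bar>"
proof
  assume H: "\<forall>d. r dvd d \<longleftrightarrow> a dvd d \<and> b dvd d"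
  have "a dvd r" "b dvd r" using H[rule_format, of r] by auto
  then have "a * b dvd r" using assms by (rule divides_mult)
  moreover have "r dvd a * b" using H by simp
  ultimately show "\<bar>r\<bar> = \<bar>a * b\<bar>" by (rule zdvd_antisym_abs[rotated])
next
  assume A: "\<bar>r\<bar> = \<bar>a * b\<bar>"
  show "\<forall>d. r dvd d \<longleftrightarrow> a dvd d \<and> b dvd d"
  proof
    fix d
    have "r dvd d \<longleftrightarrow> \<bar>r\<bar> dvd d" by (rule abs_dvd_iff[symmetric])
    also have "\<dots> \<longleftrightarrow> \<bar>a * b\<bar> dvd d" by (simp only: A)
    also have "\<dots> \<longleftrightarrow> a * b dvd d" by (rule abs_dvd_iff)
    also have "\<dots> \<longleftrightarrow> a dvd d \<and> b dvd d"
    proof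
      assume "a * b dvd d" then show "a dvd d \<and> b dvd d"
        using dvd_mult_left dvd_mult_right by blast
    next
      assume "a dvd d \<and> b dvd d" then show "a * b dvd d" using assms divides_mult by blast
    qed
    finally show "r dvd d \<longleftrightarrow> a dvd d \<and> b dvd d" .
  qed
qed



lemma tval_frame: "tfv P \<inter> V = {} \<Longrightarrow> v \<in> V \<Longrightarrow> tval G (e(v := a)) P = tval G e P"
  by (rule tval_upd) auto

context bsl begin

lemma allC: "(\<forall>x\<in>carrier G. x \<otimes>\<^bsub>G\<^esub> t = t \<otimes>\<^bsub>G\<^esub> x \<longrightarrow> P x) \<longleftrightarrow> (\<forall>n::int. P (t [^]\<^bsub>G\<^esub> n))"
  using tpow_carrier tpow_comm inC by metis

lemma exC: "(\<exists>x\<in>carrier G. x \<otimes>\<^bsub>G\<^esub> t = t \<otimes>\<^bsub>G\<^esub> x \<and> P x) \<longleftrightarrow> (\<exists>n::int. P (t [^]\<^bsub>G\<^esub> n))"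
  using tpow_carrier tpow_comm inC by metis

lemma tp_mult: "t [^]\<^bsub>G\<^esub> (a::int) \<otimes>\<^bsub>G\<^esub> t [^]\<^bsub>G\<^esub> (b::int) = t [^]\<^bsub>G\<^esub> (a + b)"
  using t_carrier by (simp add: grp.int_pow_mult)

lemma tp_inv: "inv\<^bsub>G\<^esub> (t [^]\<^bsub>G\<^esub> (a::int)) = t [^]\<^bsub>G\<^esub> (- a)"
  using t_carrier by (simp add: grp.int_pow_neg)

lemma tp_1: "t = t [^]\<^bsub>G\<^esub> (1::int)"
  using t_carrier by simp

lemma sat_InC: "sat G e (InC v) \<longleftrightarrow> e v \<otimes>\<^bsub>G\<^esub> e 3 = e 3 \<otimes>\<^bsub>G\<^esub> e v"
  by (simp add: InC_def TT_def)

lemma sat_DivF: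
  assumes "tfv P \<inter> {10, 11} = {}" "tfv Q \<inter> {10, 11} = {}"
    "tval G e P = t [^]\<^bsub>G\<^esub> (a::int)" "tval G e Q = t [^]\<^bsub>G\<^esub> (b::int)"
  shows "sat G e (DivF P Q) \<longleftrightarrow> a dvd b"
proof -
  have "sat G e (DivF P Q) \<longleftrightarrow>
     (\<forall>w\<in>carrier G. \<exists>u\<in>carrier G. cm (tval G e Q) w = cm (tval G e P) u)"
    unfolding DivF_def gAll_def CmT_def cm_def
    by (simp add: tval_frame[OF assms(1)] tval_frame[OF assms(2)])
  then show ?thesis using Div_iff[of b a] assms(3,4) by simp
qed

lemma sat_LcmF:
  assumes "tfv P \<inter> {10, 11, 12} = {}" "tfv Q \<inter> {10, 11, 12} = {}" "tfv R \<inter> {10, 11, 12} = {}"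
    "e 3 = t"
    "tval G e P = t [^]\<^bsub>G\<^esub> (a::int)" "tval G e Q = t [^]\<^bsub>G\<^esub> (b::int)"
    "tval G e R = t [^]\<^bsub>G\<^esub> (r::int)"
  shows "sat G e (LcmF P Q R) \<longleftrightarrow> (\<forall>d. r dvd d \<longleftrightarrow> a dvd d \<and> b dvd d)"
proof -
  have d1: "tfv P \<inter> {10, 11} = {}" "tfv Q \<inter> {10, 11} = {}" "tfv R \<inter> {10, 11} = {}"
    using assms(1-3) by auto
  have "sat G e (LcmF P Q R) \<longleftrightarrow> (\<forall>x\<in>carrier G. x \<otimes>\<^bsub>G\<^esub> t = t \<otimes>\<^bsub>G\<^esub> x \<longrightarrow>
     (sat G (e(12 := x)) (DivF R (GVar 12)) \<longleftrightarrow>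
      sat G (e(12 := x)) (DivF P (GVar 12)) \<and> sat G (e(12 := x)) (DivF Q (GVar 12))))"
    unfolding LcmF_def gAll_def gImp_def gIff_def using assms(4) by (simp add: sat_InC) blast
  also have "\<dots> \<longleftrightarrow> (\<forall>n::int.
     (sat G (e(12 := t [^]\<^bsub>G\<^esub> n)) (DivF R (GVar 12)) \<longleftrightarrow>
      sat G (e(12 := t [^]\<^bsub>G\<^esub> n)) (DivF P (GVar 12)) \<and> sat G (e(12 := t [^]\<^bsub>G\<^esub> n)) (DivF Q (GVar 12))))"
    by (rule allC)
  also have "\<dots> \<longleftrightarrow> (\<forall>d. r dvd d \<longleftrightarrow> a dvd d \<and> b dvd d)"
  proof -
    have "sat G (e(12 := t [^]\<^bsub>G\<^esub> n)) (DivF X (GVar 12)) \<longleftrightarrow> xx dvd n"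
      if "tfv X \<inter> {10, 11, 12} = {}" "tval G e X = t [^]\<^bsub>G\<^esub> xx" for X and xx n :: int
    proof (rule sat_DivF)
      show "tfv X \<inter> {10, 11} = {}" using that(1) by auto
      show "tval G (e(12 := t [^]\<^bsub>G\<^esub> n)) X = t [^]\<^bsub>G\<^esub> xx"
        using that by (simp add: tval_frame[OF that(1)])
    qed auto
    then show ?thesis using assms by simp
  qed
  finally show ?thesis .
qed

lemma sat_SqF:
  assumes X: "tfv X \<inter> {10, 11, 12, 13, 14} = {}" and S: "tfv S \<inter> {10, 11, 12, 13, 14} = {}"
    and e3: "e 3 = t"
    and eX: "tval G e X = t [^]\<^bsub>G\<^esub> (a::int)" and eS: "tval G e S = t [^]\<^bsub>G\<^esub> (s::int)"
  shows "sat G e (SqF X S) \<longleftrightarrow> s = a * a"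
proof -
  have X3: "tfv X \<inter> {10, 11, 12} = {}" using X by auto
  have fX: "tval G (e(13 := p, 14 := q)) X = t [^]\<^bsub>G\<^esub> a" for p q
    by (simp add: tval_frame[OF X] eX)
  have fS: "tval G (e(13 := p, 14 := q)) S = t [^]\<^bsub>G\<^esub> s" for p q
    by (simp add: tval_frame[OF S] eS)
  have L1: "sat G (e(13 := t [^]\<^bsub>G\<^esub> m1, 14 := q)) (LcmF X (GMul X TT) (GVar 13))
      \<longleftrightarrow> (\<forall>d. m1 dvd d \<longleftrightarrow> a dvd d \<and> (a + 1) dvd d)" for m1 :: int and q
  proof (rule sat_LcmF)
    show "tval G (e(13 := t [^]\<^bsub>G\<^esub> m1, 14 := q)) (GMul X TT) = t [^]\<^bsub>G\<^esub> (a + 1)"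
      using fX e3 by (simp add: TT_def) (metis tp_1 tp_mult)
  qed (use X3 e3 fX in \<open>auto simp: TT_def\<close>)
  have L2: "sat G (e(13 := p, 14 := t [^]\<^bsub>G\<^esub> m2)) (LcmF X (GMul X (GInv TT)) (GVar 14))
      \<longleftrightarrow> (\<forall>d. m2 dvd d \<longleftrightarrow> a dvd d \<and> (a - 1) dvd d)" for m2 :: int and p
  proof (rule sat_LcmF)
    show "tval G (e(13 := p, 14 := t [^]\<^bsub>G\<^esub> m2)) (GMul X (GInv TT)) = t [^]\<^bsub>G\<^esub> (a - 1)"
      using fX e3 by (simp add: TT_def) (metis tp_1 tp_inv tp_mult diff_conv_add_uminus)
  qed (use X3 e3 fX in \<open>auto simp: TT_def\<close>)
  have "sat G e (SqF X S) \<longleftrightarrow> (\<exists>x\<in>carrier G. x \<otimes>\<^bsub>G\<^esub> t = t \<otimes>\<^bsub>G\<^esub> x \<and>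
     (\<exists>x'\<in>carrier G. x' \<otimes>\<^bsub>G\<^esub> t = t \<otimes>\<^bsub>G\<^esub> x' \<and>
       sat G (e(13 := x, 14 := x')) (LcmF X (GMul X TT) (GVar 13)) \<and>
       sat G (e(13 := x, 14 := x')) (LcmF X (GMul X (GInv TT)) (GVar 14)) \<and>
       t [^]\<^bsub>G\<^esub> s \<otimes>\<^bsub>G\<^esub> t [^]\<^bsub>G\<^esub> a = x \<and>
       t [^]\<^bsub>G\<^esub> s \<otimes>\<^bsub>G\<^esub> inv\<^bsub>G\<^esub> (t [^]\<^bsub>G\<^esub> a) = x'))"
    unfolding SqF_def using e3 by (simp add: sat_InC fX fS)
  also have "\<dots> \<longleftrightarrow> (\<exists>(m1::int) (m2::int).
       sat G (e(13 := t [^]\<^bsub>G\<^esub> m1, 14 := t [^]\<^bsub>G\<^esub> m2)) (LcmF X (GMul X TT) (GVar 13)) \<and>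
       sat G (e(13 := t [^]\<^bsub>G\<^esub> m1, 14 := t [^]\<^bsub>G\<^esub> m2)) (LcmF X (GMul X (GInv TT)) (GVar 14)) \<and>
       t [^]\<^bsub>G\<^esub> s \<otimes>\<^bsub>G\<^esub> t [^]\<^bsub>G\<^esub> a = t [^]\<^bsub>G\<^esub> m1 \<and>
       t [^]\<^bsub>G\<^esub> s \<otimes>\<^bsub>G\<^esub> inv\<^bsub>G\<^esub> (t [^]\<^bsub>G\<^esub> a) = t [^]\<^bsub>G\<^esub> m2)"
    by (simp only: exC)
  also have "\<dots> \<longleftrightarrow> (\<exists>(m1::int) (m2::int).
       (\<forall>d. m1 dvd d \<longleftrightarrow> a dvd d \<and> (a + 1) dvd d) \<and>
       (\<forall>d. m2 dvd d \<longleftrightarrow> a dvd d \<and> (a - 1) dvd d) \<and> s + a = m1 \<and> s - a = m2)"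
    by (simp only: L1 L2 tp_inv tp_mult tpow_inj diff_conv_add_uminus)
  also have "\<dots> \<longleftrightarrow> (\<exists>(m1::int) (m2::int). \<bar>m1\<bar> = \<bar>a * (a + 1)\<bar> \<and> \<bar>m2\<bar> = \<bar>a * (a - 1)\<bar> \<and> s + a = m1 \<and> s - a = m2)"
  proof -
    have c1: "coprime a (a + 1)" using coprime_diff_one_left[of "a + 1"] by simp
    have c2: "coprime a (a - 1)" using coprime_diff_one_left[of a] by (simp add: coprime_commute)
    show ?thesis by (simp only: lcm_char[OF c1] lcm_char[OF c2])
  qed
  also have "\<dots> \<longleftrightarrow> s = a * a" by (rule int_sq)
  finally show ?thesis .
qed

end


context bsl begin

lemma sat_gamma:
  "sat G (asg4 \<one>\<^bsub>G\<^esub> (t [^]\<^bsub>G\<^esub> (n::int)) (t [^]\<^bsub>G\<^esub> (l::int)) (t [^]\<^bsub>G\<^esub> (m::int)) t) gamma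
     \<longleftrightarrow> n * l = m"
proof -
  define e where "e = asg4 \<one>\<^bsub>G\<^esub> (t [^]\<^bsub>G\<^esub> n) (t [^]\<^bsub>G\<^esub> l) (t [^]\<^bsub>G\<^esub> m) t"
  have e0: "e 0 = t [^]\<^bsub>G\<^esub> n" "e 1 = t [^]\<^bsub>G\<^esub> l" "e 2 = t [^]\<^bsub>G\<^esub> m" "e 3 = t"
    unfolding e_def asg4_def by simp_all
  have e1': "e (Suc 0) = t [^]\<^bsub>G\<^esub> l" using e0(2) by simp
  let ?e = "\<lambda>p q r. e(15 := p, 16 := q, 17 := r)"
  have Q1: "sat G (?e (t [^]\<^bsub>G\<^esub> s1) q r) (SqF (GMul (GVar 0) (GVar 1)) (GVar 15)) \<longleftrightarrow> s1 = (n + l) * (n + l)"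
    for s1 :: int and q r
    by (rule sat_SqF) (auto simp: e0 e1' tp_mult)
  have Q2: "sat G (?e p (t [^]\<^bsub>G\<^esub> s2) r) (SqF (GVar 0) (GVar 16)) \<longleftrightarrow> s2 = n * n"
    for s2 :: int and p r
    by (rule sat_SqF) (auto simp: e0 e1')
  have Q3: "sat G (?e p q (t [^]\<^bsub>G\<^esub> s3)) (SqF (GVar 1) (GVar 17)) \<longleftrightarrow> s3 = l * l"
    for s3 :: int and p q
    by (rule sat_SqF) (auto simp: e0 e1')
  have "sat G e gamma \<longleftrightarrow> (\<exists>x\<in>carrier G. x \<otimes>\<^bsub>G\<^esub> t = t \<otimes>\<^bsub>G\<^esub> x \<and>
      (\<exists>x'\<in>carrier G. x' \<otimes>\<^bsub>G\<^esub> t = t \<otimes>\<^bsub>G\<^esub> x' \<and>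
      (\<exists>x''\<in>carrier G. x'' \<otimes>\<^bsub>G\<^esub> t = t \<otimes>\<^bsub>G\<^esub> x'' \<and>
        sat G (?e x x' x'') (SqF (GMul (GVar 0) (GVar 1)) (GVar 15)) \<and>
        sat G (?e x x' x'') (SqF (GVar 0) (GVar 16)) \<and>
        sat G (?e x x' x'') (SqF (GVar 1) (GVar 17)) \<and>
        x = x' \<otimes>\<^bsub>G\<^esub> x'' \<otimes>\<^bsub>G\<^esub> t [^]\<^bsub>G\<^esub> m \<otimes>\<^bsub>G\<^esub> t [^]\<^bsub>G\<^esub> m)))"
    unfolding gamma_def by (simp add: sat_InC e0)
  also have "\<dots> \<longleftrightarrow> (\<exists>(s1::int) (s2::int) (s3::int).
        sat G (?e (t [^]\<^bsub>G\<^esub> s1) (t [^]\<^bsub>G\<^esub> s2) (t [^]\<^bsub>G\<^esub> s3)) (SqF (GMul (GVar 0) (GVar 1)) (GVar 15)) \<and>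
        sat G (?e (t [^]\<^bsub>G\<^esub> s1) (t [^]\<^bsub>G\<^esub> s2) (t [^]\<^bsub>G\<^esub> s3)) (SqF (GVar 0) (GVar 16)) \<and>
        sat G (?e (t [^]\<^bsub>G\<^esub> s1) (t [^]\<^bsub>G\<^esub> s2) (t [^]\<^bsub>G\<^esub> s3)) (SqF (GVar 1) (GVar 17)) \<and>
        t [^]\<^bsub>G\<^esub> s1 = t [^]\<^bsub>G\<^esub> s2 \<otimes>\<^bsub>G\<^esub> t [^]\<^bsub>G\<^esub> s3 \<otimes>\<^bsub>G\<^esub> t [^]\<^bsub>G\<^esub> m \<otimes>\<^bsub>G\<^esub> t [^]\<^bsub>G\<^esub> m)"
    by (simp only: exC)
  also have "\<dots> \<longleftrightarrow> (\<exists>(s1::int) (s2::int) (s3::int).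
        s1 = (n + l) * (n + l) \<and> s2 = n * n \<and> s3 = l * l \<and> s1 = s2 + s3 + m + m)"
    by (simp only: Q1 Q2 Q3 tp_mult tpow_inj)
  also have "\<dots> \<longleftrightarrow> n * l = m"
    by (auto simp: algebra_simps)
  finally show ?thesis unfolding e_def .
qed

end

theorem lemma4p6:
  fixes k :: int
  assumes "k \<ge> 2"
  shows "\<exists>\<gamma>::gform. fv \<gamma> \<subseteq> {0, 1, 2, 3} \<and>
    (\<forall>b1 \<in> Ab k. \<forall>n l m :: int.
       sat (BS k) (asg4 \<one>\<^bsub>BS k\<^esub> (b1 [^]\<^bsub>BS k\<^esub> n) (b1 [^]\<^bsub>BS k\<^esub> l)
                      (b1 [^]\<^bsub>BS k\<^esub> m) b1) \<gamma>
       \<longleftrightarrow> n * l = m)"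
proof (intro exI conjI ballI allI)
  show "fv gamma \<subseteq> {0, 1, 2, 3}" by (rule fv_gamma)
next
  fix b1 and n l m :: int
  assume "b1 \<in> Ab k"
  then obtain y where y: "y \<in> Zinvk k" "b1 = bs_a_pow y \<otimes>\<^bsub>BS k\<^esub> bs_b"
    unfolding Ab_def by blast
  have b1: "b1 = (y, 1)" using y(2) by (simp add: bs_a_pow_def bs_b_def BS_mult)
  interpret bsl k y using assms y(1) by unfold_locales
  have "b1 = t" using b1 by (simp add: t_def)
  then show "sat (BS k) (asg4 \<one>\<^bsub>BS k\<^esub> (b1 [^]\<^bsub>BS k\<^esub> n) (b1 [^]\<^bsub>BS k\<^esub> l)
                      (b1 [^]\<^bsub>BS k\<^esub> m) b1) gamma \<longleftrightarrow> n * l = m"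
    using sat_gamma by simp
qed


end
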